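(* Let $\alpha_0$ be the spectral abscissa of $F$ and let $\alpha_f(\sigma):=\sup_{\omega\in\mathbb{R}} f(\sigma+j\omega)$ for $\sigma\in(\alpha_0,\infty)$. Then $\alpha_f$ is strictly monotonically decreasing on $(\alpha_0,\infty)$.
   Context: Fix integers $n\ge 1$, $m\ge 0$, matrices $A_0,\dots,A_m\in\mathbb{C}^{n\times n}$, delays $\tau_0=0$ and $\tau_1,\dots,\tau_m\ge 0$, and weights $w_0,\dots,w_m>0$. Define the matrix function $F(\lambda)=\lambda I_n-\sum_{i=0}^m A_i e^{-\lambda\tau_i}$ for $\lambda\in\mathbb{C}$. The characteristic roots are the solutions of $\det F(\lambda)=0$; this set is nonempty, and every right half-plane $\{\Re\lambda\ge c\}$ contains only finitely many of them, so the spectral abscissa $\alpha_0=\sup\{\Re\lambda:\det F(\lambda)=0\}$ is a finite real number attained by some root. Define $w(\lambda)=\sum_{i=0}^m |e^{-\lambda\tau_i}|/w_i$ and, for $\lambda$ not a characteristic root, $f(\lambda)=w(\lambda)\,\sigma_{\max}(F(\lambda)^{-1})$, where $\sigma_{\max}$ denotes the largest singular value. *)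

theory Defs
  imports "HOL-Analysis.Analysis"
begin

definition charF :: "nat \<Rightarrow> (nat \<Rightarrow> complex^'n^'n) \<Rightarrow> (nat \<Rightarrow> real) \<Rightarrow> complex \<Rightarrow> complex^'n^'n" where
  "charF m A \<tau> z = mat z - (\<Sum>i\<le>m. mat (exp (- z * complex_of_real (\<tau> i))) ** A i)"

definition spec_abscissa :: "nat \<Rightarrow> (nat \<Rightarrow> complex^'n^'n) \<Rightarrow> (nat \<Rightarrow> real) \<Rightarrow> real" where
  "spec_abscissa m A \<tau> = Sup {Re z | z. det (charF m A \<tau> z) = 0}"

definition wfun :: "nat \<Rightarrow> (nat \<Rightarrow> real) \<Rightarrow> (nat \<Rightarrow> real) \<Rightarrow> complex \<Rightarrow> real" where
  "wfun m \<tau> wt z = (\<Sum>i\<le>m. cmod (exp (- z * complex_of_real (\<tau> i))) / wt i)"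

text \<open>Largest singular value = operator 2-norm (Euclidean norm on complex^'n).\<close>
definition sigma_max :: "complex^'n^'n \<Rightarrow> real" where
  "sigma_max M = onorm (\<lambda>x. M *v x)"

definition ffun :: "nat \<Rightarrow> (nat \<Rightarrow> complex^'n^'n) \<Rightarrow> (nat \<Rightarrow> real) \<Rightarrow> (nat \<Rightarrow> real) \<Rightarrow> complex \<Rightarrow> real" where
  "ffun m A \<tau> wt z = wfun m \<tau> wt z * sigma_max (matrix_inv (charF m A \<tau> z))"

definition alpha_f :: "nat \<Rightarrow> (nat \<Rightarrow> complex^'n^'n) \<Rightarrow> (nat \<Rightarrow> real) \<Rightarrow> (nat \<Rightarrow> real) \<Rightarrow> real \<Rightarrow> real" where
  "alpha_f m A \<tau> wt \<sigma> = (SUP \<omega>\<in>(UNIV::real set). ffun m A \<tau> wt (Complex \<sigma> \<omega>))"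

end

theory Submission
  imports Defs "HOL-Complex_Analysis.Complex_Analysis"
begin

lemma mat_mult_entry: "(mat c ** (B::complex^'n^'n)) $ i $ j = c * B $ i $ j"
proof -
  have "(mat c ** B) $ i $ j = (\<Sum>k\<in>UNIV. (if i = k then c else 0) * B $ k $ j)"
    by (simp add: matrix_matrix_mult_def mat_def)
  also have "\<dots> = (\<Sum>k\<in>UNIV. if k = i then c * B $ k $ j else 0)" by (rule sum.cong) auto
  also have "\<dots> = c * B $ i $ j" by simp
  finally show ?thesis .
qed

definition Gm :: "nat \<Rightarrow> (nat \<Rightarrow> complex^'n^'n) \<Rightarrow> (nat \<Rightarrow> real) \<Rightarrow> complex \<Rightarrow> complex^'n^'n" where
  "Gm m A \<tau> z = (\<Sum>i\<le>m. mat (exp (- z * complex_of_real (\<tau> i))) ** A i)"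

lemma Gm_entry: "Gm m A \<tau> z $ i $ j = (\<Sum>l\<le>m. exp (- z * complex_of_real (\<tau> l)) * A l $ i $ j)"
  by (simp add: Gm_def sum_component mat_mult_entry)

lemma charF_Gm: "charF m A \<tau> z = mat z - Gm m A \<tau> z"
  by (simp add: charF_def Gm_def)

lemma charF_entry: "charF m A \<tau> z $ i $ j = (if i = j then z else 0) - Gm m A \<tau> z $ i $ j"
  by (simp add: charF_Gm mat_def)

lemma mulv_diff: "((P::complex^'n^'n) - Q) *v x = P *v x - Q *v x"
  by (simp add: vec_eq_iff matrix_vector_mult_def sum_subtractf algebra_simps)

lemma mat_mulv: "mat c *v (x::complex^'n) = c *s x"
proof -
  have "(mat c *v x) $ i = (\<Sum>k\<in>UNIV. (if i = k then c else 0) * x $ k)" for i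
    by (simp add: matrix_vector_mult_def mat_def)
  also have "(\<Sum>k\<in>UNIV. (if i = k then c else 0) * x $ k) = (\<Sum>k\<in>UNIV. if k = i then c * x $ k else 0)" for i
    by (rule sum.cong) auto
  also have "(\<Sum>k\<in>UNIV. if k = i then c * x $ k else 0) = (c *s x) $ i" for i by simp
  finally show ?thesis by (simp add: vec_eq_iff)
qed

lemma norm_smult_vec: "norm (c *s (x::complex^'n)) = cmod c * norm x"
proof -
  have "norm (c *s x) = sqrt (\<Sum>i\<in>UNIV. (cmod c)^2 * (cmod (x$i))^2)"
    by (simp add: norm_vec_def L2_set_def norm_mult power_mult_distrib)
  also have "\<dots> = sqrt ((cmod c)^2 * (\<Sum>i\<in>UNIV. (cmod (x$i))^2))"
    by (simp add: sum_distrib_left)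
  also have "\<dots> = cmod c * norm x"
    by (simp add: real_sqrt_mult norm_vec_def L2_set_def)
  finally show ?thesis .
qed

lemma onorm_le_sum_c:
  fixes B :: "complex^'n^'n"
  shows "onorm((*v) B) \<le> (\<Sum>i\<in>UNIV. \<Sum>j\<in>UNIV. cmod (B $ i $ j))"
proof (rule onorm_le)
  fix x
  have "norm (B *v x) \<le> (\<Sum>i\<in>UNIV. norm ((B *v x) $ i))"
    by (simp add: norm_vec_def L2_set_le_sum)
  also have "\<dots> \<le> (\<Sum>i\<in>UNIV. \<Sum>j\<in>UNIV. cmod (B $ i $ j) * norm x)"
  proof (rule sum_mono)
    fix i
    have "norm ((B *v x) $ i) = norm (\<Sum>j\<in>UNIV. B $ i $ j * x $ j)"
      by (simp add: matrix_vector_mult_def)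
    also have "\<dots> \<le> (\<Sum>j\<in>UNIV. norm (B $ i $ j * x $ j))"
      by (rule norm_sum)
    also have "\<dots> \<le> (\<Sum>j\<in>UNIV. cmod (B $ i $ j) * norm x)"
      by (rule sum_mono, simp only: norm_mult, intro mult_left_mono Finite_Cartesian_Product.norm_nth_le norm_ge_zero)
    finally show "norm ((B *v x) $ i) \<le> (\<Sum>j\<in>UNIV. cmod (B $ i $ j) * norm x)" .
  qed
  finally show "norm (B *v x) \<le> (\<Sum>i\<in>UNIV. \<Sum>j\<in>UNIV. cmod (B $ i $ j)) * norm x"
    by (simp add: sum_distrib_right)
qed

lemma inv_facts:
  fixes B :: "complex^'n^'n"
  assumes "det B \<noteq> 0"
  shows "B ** matrix_inv B = mat 1 \<and> matrix_inv B ** B = mat 1"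
proof -
  have "invertible B" using assms invertible_det_nz by blast
  then have "\<exists>B'. B ** B' = mat 1 \<and> B' ** B = mat 1" unfolding invertible_def .
  then show ?thesis unfolding matrix_inv_def by (rule someI_ex)
qed

lemma inv_mulv:
  fixes B :: "complex^'n^'n"
  assumes "det B \<noteq> 0"
  shows "B *v (matrix_inv B *v y) = y"
  using inv_facts[OF assms] by (simp add: matrix_vector_mul_assoc)

lemma inv_cramer:
  fixes B :: "complex^'n^'n"
  assumes "det B \<noteq> 0"
  shows "matrix_inv B *v b = (\<chi> k. det(\<chi> i j. if j=k then b$i else B$i$j) / det B)"
  using cramer[OF assms] inv_mulv[OF assms] by blast

lemma hol_det:
  fixes M :: "complex \<Rightarrow> complex^'n^'n"
  assumes "\<And>i j. (\<lambda>z. M z $ i $ j) holomorphic_on S"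
  shows "(\<lambda>z. det (M z)) holomorphic_on S"
  unfolding det_def
  by (intro holomorphic_on_sum holomorphic_on_mult holomorphic_on_prod holomorphic_on_const assms)

lemma hol_charF_entry: "(\<lambda>z. charF m A \<tau> z $ i $ j) holomorphic_on S"
  unfolding charF_entry Gm_entry
  by (cases "i = j") (auto intro!: holomorphic_intros)

lemma hol_inv_comp:
  assumes "\<forall>z\<in>S. det (charF m A \<tau> z) \<noteq> 0"
  shows "(\<lambda>z. (matrix_inv (charF m A \<tau> z) *v b) $ k) holomorphic_on S"
proof -
  have "(\<lambda>z. det(\<chi> i j. if j=k then b$i else charF m A \<tau> z$i$j) / det (charF m A \<tau> z)) holomorphic_on S"
  proof (intro holomorphic_on_divide hol_det)
    fix i j
    show "(\<lambda>z. (\<chi> i j. if j=k then b$i else charF m A \<tau> z$i$j) $ i $ j) holomorphic_on S"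
      by (cases "j = k") (simp_all add: hol_charF_entry)
  qed (auto simp: hol_charF_entry assms)
  then show ?thesis
    by (rule holomorphic_transform) (simp add: inv_cramer assms)
qed

definition KA :: "(nat \<Rightarrow> complex^'n^'n) \<Rightarrow> nat \<Rightarrow> real" where
  "KA A l = (\<Sum>i\<in>UNIV. \<Sum>j\<in>UNIV. cmod (A l $ i $ j))"

definition Kc :: "nat \<Rightarrow> (nat \<Rightarrow> complex^'n^'n) \<Rightarrow> (nat \<Rightarrow> real) \<Rightarrow> real \<Rightarrow> real" where
  "Kc m A \<tau> c = (\<Sum>l\<le>m. exp (- c * \<tau> l) * KA A l)"

lemma cmod_exp_le:
  assumes "t \<ge> 0" "Re z \<ge> c"
  shows "cmod (exp (- z * complex_of_real t)) \<le> exp (- c * t)"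
  using assms by (simp add: mult_right_mono)

lemma mulv_diff2: "(P::complex^'n^'n) *v (x - y) = P *v x - P *v y"
  by (simp add: vec_eq_iff matrix_vector_mult_def sum_subtractf algebra_simps)

lemma Gm_bound:
  assumes "\<forall>l\<le>m. \<tau> l \<ge> 0" "Re z \<ge> c"
  shows "norm (Gm m A \<tau> z *v x) \<le> Kc m A \<tau> c * norm x"
proof -
  have "norm (Gm m A \<tau> z *v x) \<le> onorm ((*v) (Gm m A \<tau> z)) * norm x"
    by (rule onorm) simp
  also have "\<dots> \<le> (\<Sum>i\<in>UNIV. \<Sum>j\<in>UNIV. cmod (Gm m A \<tau> z $ i $ j)) * norm x"
    by (intro mult_right_mono onorm_le_sum_c norm_ge_zero)
  also have "(\<Sum>i\<in>UNIV. \<Sum>j\<in>UNIV. cmod (Gm m A \<tau> z $ i $ j)) \<le> Kc m A \<tau> c"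
  proof -
    have "(\<Sum>i\<in>UNIV. \<Sum>j\<in>UNIV. cmod (Gm m A \<tau> z $ i $ j))
        \<le> (\<Sum>i\<in>UNIV. \<Sum>j\<in>UNIV. \<Sum>l\<le>m. exp (- c * \<tau> l) * cmod (A l $ i $ j))"
    proof (intro sum_mono)
      fix i j
      have "cmod (Gm m A \<tau> z $ i $ j) \<le> (\<Sum>l\<le>m. cmod (exp (- z * complex_of_real (\<tau> l)) * A l $ i $ j))"
        unfolding Gm_entry by (rule norm_sum)
      also have "\<dots> \<le> (\<Sum>l\<le>m. exp (- c * \<tau> l) * cmod (A l $ i $ j))"
        unfolding norm_mult using assms
        by (intro sum_mono mult_right_mono cmod_exp_le) auto
      finally show "cmod (Gm m A \<tau> z $ i $ j) \<le> (\<Sum>l\<le>m. exp (- c * \<tau> l) * cmod (A l $ i $ j))" .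
    qed
    also have "\<dots> = Kc m A \<tau> c"
      unfolding Kc_def KA_def sum_distrib_left
      by (subst sum.swap, rule sum.cong, simp, subst sum.swap, simp)
    finally show ?thesis .
  qed
  then have "(\<Sum>i\<in>UNIV. \<Sum>j\<in>UNIV. cmod (Gm m A \<tau> z $ i $ j)) * norm x \<le> Kc m A \<tau> c * norm x"
    by (intro mult_right_mono norm_ge_zero)
  finally show ?thesis .
qed

lemma F_lower:
  assumes "\<forall>l\<le>m. \<tau> l \<ge> 0" "Re z \<ge> c"
  shows "norm (charF m A \<tau> z *v x) \<ge> (cmod z - Kc m A \<tau> c) * norm x"
proof -
  have "charF m A \<tau> z *v x = z *s x - Gm m A \<tau> z *v x"
    by (simp add: charF_Gm mulv_diff mat_mulv)
  then have "norm (charF m A \<tau> z *v x) \<ge> norm (z *s x) - norm (Gm m A \<tau> z *v x)"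
    by (simp add: norm_triangle_ineq2)
  then show ?thesis using Gm_bound[OF assms, of A x] by (simp add: norm_smult_vec algebra_simps)
qed

lemma det_nz_big:
  assumes "\<forall>l\<le>m. \<tau> l \<ge> 0" "Re z \<ge> c" "cmod z > Kc m A \<tau> c"
  shows "det (charF m A \<tau> z) \<noteq> 0"
proof -
  have "inj ((*v) (charF m A \<tau> z))"
  proof (rule injI)
    fix x y assume "charF m A \<tau> z *v x = charF m A \<tau> z *v y"
    then have "charF m A \<tau> z *v (x - y) = 0" by (simp add: mulv_diff2)
    with F_lower[OF assms(1,2), of A "x - y"] assms(3) have "norm (x - y) \<le> 0"
      by (smt (verit) mult_le_0_iff norm_ge_zero norm_zero)
    then show "x = y" by simp
  qed
  then show ?thesis
    using det_nz_iff_inj_gen[OF matrix_vector_mul_linear_gen, of "charF m A \<tau> z"] by simp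
qed

lemma inv_bound:
  assumes "\<forall>l\<le>m. \<tau> l \<ge> 0" "Re z \<ge> c" "cmod z > Kc m A \<tau> c"
  shows "norm (matrix_inv (charF m A \<tau> z) *v y) \<le> norm y / (cmod z - Kc m A \<tau> c)"
proof -
  have d: "det (charF m A \<tau> z) \<noteq> 0" by (rule det_nz_big[OF assms])
  have "(cmod z - Kc m A \<tau> c) * norm (matrix_inv (charF m A \<tau> z) *v y) \<le> norm y"
    using F_lower[OF assms(1,2), of A "matrix_inv (charF m A \<tau> z) *v y"] inv_mulv[OF d] by simp
  then show ?thesis using assms(3) by (simp add: field_simps)
qed

lemma smax_bound:
  assumes "\<forall>l\<le>m. \<tau> l \<ge> 0" "Re z \<ge> c" "cmod z > Kc m A \<tau> c"
  shows "sigma_max (matrix_inv (charF m A \<tau> z)) \<le> 1 / (cmod z - Kc m A \<tau> c)"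
  unfolding sigma_max_def
  by (rule onorm_le) (use inv_bound[OF assms] in simp)

lemma no_roots:
  assumes tau: "\<forall>l\<le>m. \<tau> l \<ge> 0" and sa: "spec_abscissa m A \<tau> < \<sigma>0" and z: "Re z \<ge> \<sigma>0"
  shows "det (charF m A \<tau> z) \<noteq> 0"
proof
  assume dz: "det (charF m A \<tau> z) = 0"
  let ?R = "{Re z | z. det (charF m A \<tau> z) = 0}"
  have "bdd_above ?R"
  proof (rule bdd_aboveI)
    fix r assume "r \<in> ?R"
    then obtain w where w: "r = Re w" "det (charF m A \<tau> w) = 0" by blast
    show "r \<le> max 0 (Kc m A \<tau> 0)"
    proof (cases "Re w \<ge> 0")
      case True
      then have "\<not> cmod w > Kc m A \<tau> 0" using det_nz_big[OF tau True] w(2) by blast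
      then show ?thesis using w(1) complex_Re_le_cmod[of w] by linarith
    qed (use w in auto)
  qed
  moreover have "Re z \<in> ?R" using dz by blast
  ultimately have "Re z \<le> Sup ?R" by (rule cSup_upper[rotated])
  then show False using sa z unfolding spec_abscissa_def by linarith
qed

lemma mulv_axis: "((B::complex^'n^'n) *v axis j 1) $ i = B $ i $ j"
proof -
  have "(B *v axis j 1) $ i = (\<Sum>k\<in>UNIV. B $ i $ k * (if k = j then 1 else 0))"
    by (simp add: matrix_vector_mult_def axis_def)
  also have "\<dots> = (\<Sum>k\<in>UNIV. if k = j then B $ i $ k else 0)" by (rule sum.cong) auto
  also have "\<dots> = B $ i $ j" by simp
  finally show ?thesis .
qed

lemma onorm_diff_le:
  fixes P Q :: "complex^'n^'n"
  shows "onorm ((*v) P) \<le> onorm ((*v) Q) + real CARD('n) * real CARD('n) * norm (P - Q)"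
proof -
  have e: "(*v) P = (\<lambda>x. Q *v x + (P - Q) *v x)" by (simp add: mulv_diff)
  have "onorm ((*v) P) \<le> onorm ((*v) Q) + onorm ((*v) (P - Q))"
    unfolding e by (rule onorm_triangle) simp_all
  also have "onorm ((*v) (P - Q)) \<le> (\<Sum>i\<in>UNIV. \<Sum>j\<in>UNIV. cmod ((P - Q) $ i $ j))"
    by (rule onorm_le_sum_c)
  also have "\<dots> \<le> (\<Sum>i\<in>(UNIV::'n set). \<Sum>j\<in>(UNIV::'n set). norm (P - Q))"
    by (intro sum_mono order.trans[OF Finite_Cartesian_Product.norm_nth_le Finite_Cartesian_Product.norm_nth_le])
  also have "\<dots> = real CARD('n) * real CARD('n) * norm (P - Q)" by simp
  finally show ?thesis by simp
qed

lemma onorm_lip: "(real CARD('n) * real CARD('n))-lipschitz_on UNIV (\<lambda>P::complex^'n^'n. onorm ((*v) P))"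
proof (rule lipschitz_onI)
  fix P Q :: "complex^'n^'n"
  have "onorm ((*v) P) \<le> onorm ((*v) Q) + real CARD('n) * real CARD('n) * norm (P - Q)"
    by (rule onorm_diff_le)
  moreover have "onorm ((*v) Q) \<le> onorm ((*v) P) + real CARD('n) * real CARD('n) * norm (Q - P)"
    by (rule onorm_diff_le)
  ultimately show "dist (onorm ((*v) P)) (onorm ((*v) Q)) \<le> real CARD('n) * real CARD('n) * dist P Q"
    by (simp add: dist_norm norm_minus_commute abs_le_iff)
qed simp

lemma cont_smax:
  assumes S: "open S" and nz: "\<forall>z\<in>S. det (charF m A \<tau> z) \<noteq> 0"
  shows "continuous_on S (\<lambda>z. sigma_max (matrix_inv (charF m A \<tau> z)))"
proof -
  have ent: "continuous_on S (\<lambda>z. matrix_inv (charF m A \<tau> z) $ i $ j)" for i j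
  proof -
    have "(\<lambda>z. (matrix_inv (charF m A \<tau> z) *v axis j 1) $ i) holomorphic_on S"
      by (rule hol_inv_comp[OF nz])
    then have "continuous_on S (\<lambda>z. (matrix_inv (charF m A \<tau> z) *v axis j 1) $ i)"
      by (rule holomorphic_on_imp_continuous_on)
    then show ?thesis by (simp add: mulv_axis)
  qed
  have "continuous_on S (\<lambda>z. (\<chi> i j. matrix_inv (charF m A \<tau> z) $ i $ j))"
    by (intro continuous_on_vec_lambda ent)
  then have c1: "continuous_on S (\<lambda>z. matrix_inv (charF m A \<tau> z))" by simp
  have c2: "continuous_on UNIV (\<lambda>P::complex^'n^'n. onorm ((*v) P))"
    by (rule lipschitz_on_continuous_on[OF onorm_lip])
  show ?thesis unfolding sigma_max_def
    using continuous_on_compose2[OF c2 c1] by simp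
qed

lemma mulv_scaleR: "(B::complex^'n^'n) *v (c *\<^sub>R y) = c *\<^sub>R (B *v y)"
  using matrix_vector_mul_linear[of B] by (simp add: linear_scale)

lemma norm_axis_c: "norm (axis i (1::complex) :: complex^'n) = 1"
proof -
  have "(\<Sum>j\<in>UNIV. (cmod (axis i (1::complex) $ j))^2) = (\<Sum>j\<in>(UNIV::'n set). if j = i then 1 else 0)"
    by (rule sum.cong) (auto simp: axis_def)
  then show ?thesis by (simp add: norm_vec_def L2_set_def)
qed

lemma onorm_attained:
  fixes B :: "complex^'n^'n"
  shows "\<exists>x. norm x = 1 \<and> onorm ((*v) B) = norm (B *v x)"
proof -
  obtain i :: 'n where True by blast
  have ne: "sphere (0::complex^'n) 1 \<noteq> {}"
    using norm_axis_c[of i] by (auto simp: sphere_def intro!: exI[of _ "axis i 1"])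
  have "continuous_on (sphere 0 1) (\<lambda>x::complex^'n. norm (B *v x))"
    by (intro continuous_intros)
  then obtain x0 where x0: "x0 \<in> sphere 0 1" "\<And>y. y \<in> sphere 0 1 \<Longrightarrow> norm (B *v y) \<le> norm (B *v x0)"
    using continuous_attains_sup[OF compact_sphere ne] by blast
  have n1: "norm x0 = 1" using x0(1) by simp
  have "onorm ((*v) B) \<le> norm (B *v x0)"
  proof (rule onorm_le)
    fix y :: "complex^'n"
    show "norm (B *v y) \<le> norm (B *v x0) * norm y"
    proof (cases "y = 0")
      case False
      let ?u = "(1 / norm y) *\<^sub>R y"
      have "?u \<in> sphere 0 1" using False by simp
      then have "norm (B *v ?u) \<le> norm (B *v x0)" by (rule x0(2))
      moreover have "B *v y = norm y *\<^sub>R (B *v ?u)" using False by (simp add: mulv_scaleR)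
      ultimately show ?thesis by (simp add: mult.commute mult_left_mono)
    qed simp
  qed
  moreover have "norm (B *v x0) \<le> onorm ((*v) B) * norm x0"
    by (rule onorm) simp
  ultimately show ?thesis using n1 by (intro exI[of _ x0]) simp
qed

lemma KL:
  fixes g :: "complex \<Rightarrow> complex"
  assumes hol: "g holomorphic_on {z. Re z > \<sigma>0}"
    and s01: "\<sigma>0 < \<sigma>1"
    and decay: "\<And>e. e > 0 \<Longrightarrow> \<exists>R. \<forall>z. Re z \<ge> \<sigma>1 \<longrightarrow> cmod z \<ge> R \<longrightarrow> cmod (g z) < e"
    and z2: "Re z2 > \<sigma>1" and nz: "g z2 \<noteq> 0"
    and line: "\<And>z. Re z = \<sigma>1 \<Longrightarrow> cmod (g z) \<le> cmod (g z2)"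
  shows False
proof -
  define \<epsilon> where "\<epsilon> = cmod (g z2)"
  have ep: "\<epsilon> > 0" using nz by (simp add: \<epsilon>_def)
  obtain R where R: "\<And>z. Re z \<ge> \<sigma>1 \<Longrightarrow> cmod z \<ge> R \<Longrightarrow> cmod (g z) < \<epsilon>"
    using decay[OF ep] by blast
  define S where "S = {z. \<sigma>1 < Re z}"
  have SH: "S \<subseteq> {z. Re z > \<sigma>0}" using s01 by (auto simp: S_def)
  have CH: "{z. Re z \<ge> \<sigma>1} \<subseteq> {z. Re z > \<sigma>0}" using s01 by auto
  have contH: "continuous_on {z. Re z > \<sigma>0} g" by (rule holomorphic_on_imp_continuous_on[OF hol])
  have bound: "cmod (g z) \<le> \<epsilon>" if zS: "z \<in> S" for z
  proof -
    define R' where "R' = max R (cmod z + 1)"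
    define T where "T = S \<inter> ball 0 R'"
    have oT: "open T" unfolding T_def S_def by (intro open_Int open_halfspace_Re_gt open_ball)
    have clT: "closure T \<subseteq> {w. Re w \<ge> \<sigma>1} \<inter> cball 0 R'"
      by (rule closure_minimal) (auto simp: T_def S_def intro: closed_Int closed_halfspace_Re_ge)
    show ?thesis
    proof (rule maximum_modulus_frontier[of g T])
      show "g holomorphic_on interior T"
        using interior_open[OF oT] SH hol by (auto simp: T_def intro: holomorphic_on_subset)
      show "continuous_on (closure T) g"
        using clT CH contH by (meson continuous_on_subset inf.boundedE subset_trans)
      show "bounded T" unfolding T_def by (intro bounded_Int) simp
      show "z \<in> T" using zS by (simp add: T_def R'_def)
      fix w assume "w \<in> frontier T"
      then have w: "w \<in> closure T" "w \<notin> T" using interior_open[OF oT] by (auto simp: frontier_def)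
      then have w1: "Re w \<ge> \<sigma>1" "cmod w \<le> R'" using clT by auto
      show "cmod (g w) \<le> \<epsilon>"
      proof (cases "Re w = \<sigma>1")
        case True then show ?thesis using line by (simp add: \<epsilon>_def)
      next
        case False
        then have "cmod w \<ge> R'" using w(2) w1 by (auto simp: T_def S_def)
        then have "cmod w \<ge> R" by (simp add: R'_def)
        then show ?thesis using R[OF w1(1)] by fastforce
      qed
    qed
  qed
  have "g constant_on S"
  proof (rule maximum_modulus_principle[of g S S z2])
    show "g holomorphic_on S" using hol SH by (rule holomorphic_on_subset)
    show "open S" "open S" unfolding S_def by (rule open_halfspace_Re_gt)+
    show "connected S" unfolding S_def by (rule connected_halfspace_Re_gt)
    show "z2 \<in> S" using z2 by (simp add: S_def)
    show "\<And>z. z \<in> S \<Longrightarrow> cmod (g z) \<le> cmod (g z2)" using bound by (simp add: \<epsilon>_def)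
  qed simp
  then obtain c where c: "\<And>z. z \<in> S \<Longrightarrow> g z = c" unfolding constant_on_def by blast
  define a where "a = max (\<bar>\<sigma>1\<bar> + 1) \<bar>R\<bar>"
  have aS: "complex_of_real a \<in> S" by (simp add: S_def a_def)
  have "cmod (g (complex_of_real a)) < \<epsilon>" by (rule R) (auto simp: a_def)
  moreover have "g (complex_of_real a) = g z2" using c[OF aS] c z2 by (simp add: S_def)
  ultimately show False by (simp add: \<epsilon>_def)
qed

lemma smax_pos:
  fixes B :: "complex^'n^'n"
  assumes "det B \<noteq> 0"
  shows "sigma_max (matrix_inv B) > 0"
proof -
  obtain i :: 'n where True by blast
  let ?y = "axis i (1::complex) :: complex^'n"
  have "matrix_inv B *v ?y \<noteq> 0"
  proof
    assume "matrix_inv B *v ?y = 0"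
    then have "?y = 0" using inv_mulv[OF assms, of ?y] by simp
    then show False using norm_axis_c[of i] by simp
  qed
  then have "0 < norm (matrix_inv B *v ?y) / norm ?y" using norm_axis_c[of i] by simp
  also have "\<dots> \<le> sigma_max (matrix_inv B)" unfolding sigma_max_def by (rule le_onorm) simp
  finally show ?thesis .
qed

lemma cs_vec: "cmod (\<Sum>j\<in>UNIV. cnj (v$j) * u$j) \<le> norm v * norm (u::complex^'n)"
proof -
  have "cmod (\<Sum>j\<in>UNIV. cnj (v$j) * u$j) \<le> (\<Sum>j\<in>UNIV. \<bar>cmod (v$j)\<bar> * \<bar>cmod (u$j)\<bar>)"
    by (rule order.trans[OF norm_sum]) (simp add: norm_mult)
  also have "\<dots> \<le> L2_set (\<lambda>j. cmod (v$j)) UNIV * L2_set (\<lambda>j. cmod (u$j)) UNIV"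
    by (rule L2_set_mult_ineq)
  finally show ?thesis by (simp add: norm_vec_def)
qed

lemma self_vec: "(\<Sum>j\<in>UNIV. cnj (v$j) * v$j) = complex_of_real ((norm (v::complex^'n))^2)"
proof -
  have "(\<Sum>j\<in>UNIV. cnj (v$j) * v$j) = (\<Sum>j\<in>UNIV. complex_of_real ((cmod (v$j))^2))"
    by (rule sum.cong) (simp_all only: complex_norm_square mult.commute)
  also have "\<dots> = complex_of_real (\<Sum>j\<in>UNIV. (cmod (v$j))^2)" by simp
  also have "(\<Sum>j\<in>UNIV. (cmod (v$j))^2) = (norm v)^2"
    by (simp add: norm_vec_def L2_set_def sum_nonneg)
  finally show ?thesis .
qed

lemma wfun_line: "wfun m \<tau> wt (Complex \<sigma> \<omega>) = (\<Sum>l\<le>m. exp (- \<sigma> * \<tau> l) / wt l)"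
  by (simp add: wfun_def)

lemma decay_smax:
  assumes tau: "\<forall>l\<le>m. \<tau> l \<ge> 0" and e: "e > 0"
  shows "\<exists>R. \<forall>z. Re z \<ge> c \<longrightarrow> cmod z \<ge> R \<longrightarrow> sigma_max (matrix_inv (charF m A \<tau> z)) < e"
proof (intro exI allI impI)
  fix z assume z: "Re z \<ge> c" "cmod z \<ge> Kc m A \<tau> c + 2 / e"
  have p: "cmod z - Kc m A \<tau> c \<ge> 2 / e" using z by simp
  have "2 / e > 0" using e by simp
  then have gt: "cmod z > Kc m A \<tau> c" using p by linarith
  have "sigma_max (matrix_inv (charF m A \<tau> z)) \<le> 1 / (cmod z - Kc m A \<tau> c)"
    by (rule smax_bound[OF tau z(1) gt])
  also have "\<dots> \<le> 1 / (2 / e)" using p \<open>2 / e > 0\<close> gt by (intro divide_left_mono mult_pos_pos) auto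
  also have "\<dots> < e" using e by simp
  finally show "sigma_max (matrix_inv (charF m A \<tau> z)) < e" .
qed

lemma line_max:
  assumes tau: "\<forall>l\<le>m. \<tau> l \<ge> 0" and sa: "spec_abscissa m A \<tau> < \<sigma>0" and s: "\<sigma>0 < \<sigma>"
  shows "\<exists>w. \<forall>\<omega>. sigma_max (matrix_inv (charF m A \<tau> (Complex \<sigma> \<omega>)))
              \<le> sigma_max (matrix_inv (charF m A \<tau> (Complex \<sigma> w)))"
proof -
  let ?H = "{z. Re z > \<sigma>0}"
  have nzH: "\<forall>z\<in>?H. det (charF m A \<tau> z) \<noteq> 0" using no_roots[OF tau sa] by auto
  define \<psi> where "\<psi> \<omega> = sigma_max (matrix_inv (charF m A \<tau> (Complex \<sigma> \<omega>)))" for \<omega>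
  have cC: "continuous_on UNIV (\<lambda>\<omega>. Complex \<sigma> \<omega>)"
    unfolding Complex_eq by (intro continuous_intros)
  have cont: "continuous_on UNIV \<psi>"
    unfolding \<psi>_def
    by (rule continuous_on_compose2[OF cont_smax[OF open_halfspace_Re_gt nzH] cC]) (use s in auto)
  have p0: "\<psi> 0 > 0" unfolding \<psi>_def by (rule smax_pos) (rule no_roots[OF tau sa], use s in simp)
  obtain R where R: "\<And>z. Re z \<ge> \<sigma> \<Longrightarrow> cmod z \<ge> R \<Longrightarrow> sigma_max (matrix_inv (charF m A \<tau> z)) < \<psi> 0"
    using decay_smax[OF tau p0, of \<sigma> A] by blast
  have ne: "{-\<bar>R\<bar>..\<bar>R\<bar>} \<noteq> {}" by simp
  obtain w where w: "w \<in> {-\<bar>R\<bar>..\<bar>R\<bar>}" "\<And>y. y \<in> {-\<bar>R\<bar>..\<bar>R\<bar>} \<Longrightarrow> \<psi> y \<le> \<psi> w"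
    using continuous_attains_sup[OF compact_Icc ne continuous_on_subset[OF cont]] by blast
  have "\<psi> \<omega> \<le> \<psi> w" for \<omega>
  proof (cases "\<bar>\<omega>\<bar> \<le> \<bar>R\<bar>")
    case True then show ?thesis using w(2)[of \<omega>] by (simp add: abs_le_iff)
  next
    case False
    have "cmod (Complex \<sigma> \<omega>) \<ge> \<bar>Im (Complex \<sigma> \<omega>)\<bar>" by (rule abs_Im_le_cmod)
    then have "cmod (Complex \<sigma> \<omega>) \<ge> R" using False by simp
    then have "\<psi> \<omega> < \<psi> 0" using R[of "Complex \<sigma> \<omega>"] by (simp add: \<psi>_def)
    also have "\<psi> 0 \<le> \<psi> w" by (rule w(2)) simp
    finally show ?thesis by simp
  qed
  then show ?thesis unfolding \<psi>_def by blast
qed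

theorem proposition1:
  fixes m :: nat and A :: "nat \<Rightarrow> complex^'n^'n" and \<tau> wt :: "nat \<Rightarrow> real"
  assumes "\<tau> 0 = 0"
    and "\<forall>i\<le>m. \<tau> i \<ge> 0"
    and "\<forall>i\<le>m. wt i > 0"
  shows "\<forall>\<sigma>1 \<sigma>2. spec_abscissa m A \<tau> < \<sigma>1 \<longrightarrow> \<sigma>1 < \<sigma>2 \<longrightarrow>
           alpha_f m A \<tau> wt \<sigma>2 < alpha_f m A \<tau> wt \<sigma>1"
proof (intro allI impI)
  fix \<sigma>1 \<sigma>2 :: real
  assume h1: "spec_abscissa m A \<tau> < \<sigma>1" and h2: "\<sigma>1 < \<sigma>2"
  have tau: "\<forall>l\<le>m. \<tau> l \<ge> 0" using assms(2) by simp
  define \<sigma>0 where "\<sigma>0 = (spec_abscissa m A \<tau> + \<sigma>1) / 2"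
  have sa: "spec_abscissa m A \<tau> < \<sigma>0" and s01: "\<sigma>0 < \<sigma>1" using h1 by (auto simp: \<sigma>0_def)
  let ?H = "{z. Re z > \<sigma>0}"
  have nzH: "\<forall>z\<in>?H. det (charF m A \<tau> z) \<noteq> 0" using no_roots[OF tau sa] by auto
  define \<phi> where "\<phi> z = sigma_max (matrix_inv (charF m A \<tau> z))" for z
  define W where "W \<sigma> = (\<Sum>l\<le>m. exp (- \<sigma> * \<tau> l) / wt l)" for \<sigma>
  have ff: "ffun m A \<tau> wt (Complex \<sigma> \<omega>) = W \<sigma> * \<phi> (Complex \<sigma> \<omega>)" for \<sigma> \<omega>
    by (simp add: ffun_def wfun_line W_def \<phi>_def)
  have Wpos: "W \<sigma> > 0" for \<sigma>
  proof -
    have "exp (- \<sigma> * \<tau> 0) / wt 0 \<le> W \<sigma>"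
      unfolding W_def using assms(3) by (intro member_le_sum) auto
    moreover have "exp (- \<sigma> * \<tau> 0) / wt 0 > 0" using assms(3) by simp
    ultimately show ?thesis by linarith
  qed
  have Wmono: "W \<sigma>2 \<le> W \<sigma>1"
    unfolding W_def using assms(3) tau h2
    by (intro sum_mono divide_right_mono) (auto intro: mult_right_mono less_imp_le)
  have alpha_eq: "\<exists>w. alpha_f m A \<tau> wt \<sigma> = W \<sigma> * \<phi> (Complex \<sigma> w) \<and> (\<forall>\<omega>. \<phi> (Complex \<sigma> \<omega>) \<le> \<phi> (Complex \<sigma> w))"
    if ss: "\<sigma> > \<sigma>0" for \<sigma>
  proof -
    obtain w where w: "\<And>\<omega>. \<phi> (Complex \<sigma> \<omega>) \<le> \<phi> (Complex \<sigma> w)"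
      using line_max[OF tau sa ss] unfolding \<phi>_def by blast
    have "alpha_f m A \<tau> wt \<sigma> = Sup (range (\<lambda>\<omega>. W \<sigma> * \<phi> (Complex \<sigma> \<omega>)))"
      by (simp add: alpha_f_def ff)
    also have "\<dots> = W \<sigma> * \<phi> (Complex \<sigma> w)"
      by (rule cSup_eq_maximum) (auto intro!: mult_left_mono w less_imp_le[OF Wpos])
    finally show ?thesis using w by blast
  qed
  obtain w2 where a2: "alpha_f m A \<tau> wt \<sigma>2 = W \<sigma>2 * \<phi> (Complex \<sigma>2 w2)"
    using alpha_eq[of \<sigma>2] h2 s01 by auto
  obtain w1 where a1: "alpha_f m A \<tau> wt \<sigma>1 = W \<sigma>1 * \<phi> (Complex \<sigma>1 w1)"
    and max1: "\<And>\<omega>. \<phi> (Complex \<sigma>1 \<omega>) \<le> \<phi> (Complex \<sigma>1 w1)"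
    using alpha_eq[of \<sigma>1] s01 by auto
  define z2 where "z2 = Complex \<sigma>2 w2"
  have z2H: "z2 \<in> ?H" using h2 s01 by (simp add: z2_def)
  have pz2: "\<phi> z2 > 0" unfolding \<phi>_def by (rule smax_pos) (use nzH z2H in blast)
  have ex: "\<exists>\<omega>. \<phi> (Complex \<sigma>1 \<omega>) > \<phi> z2"
  proof (rule ccontr)
    assume "\<not> (\<exists>\<omega>. \<phi> (Complex \<sigma>1 \<omega>) > \<phi> z2)"
    then have line0: "\<And>\<omega>. \<phi> (Complex \<sigma>1 \<omega>) \<le> \<phi> z2" by (simp add: not_less)
    obtain x where x: "norm x = 1" "onorm ((*v) (matrix_inv (charF m A \<tau> z2))) = norm (matrix_inv (charF m A \<tau> z2) *v x)"
      using onorm_attained by blast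
    define v where "v = matrix_inv (charF m A \<tau> z2) *v x"
    have nv: "norm v = \<phi> z2" using x(2) by (simp add: v_def \<phi>_def sigma_max_def)
    define g where "g z = (\<Sum>j\<in>UNIV. cnj (v$j) * (matrix_inv (charF m A \<tau> z) *v x)$j)" for z
    have hol: "g holomorphic_on ?H"
      unfolding g_def by (intro holomorphic_on_sum holomorphic_on_mult holomorphic_on_const hol_inv_comp[OF nzH])
    have gb: "cmod (g z) \<le> \<phi> z2 * \<phi> z" for z
    proof -
      have "cmod (g z) \<le> norm v * norm (matrix_inv (charF m A \<tau> z) *v x)"
        unfolding g_def by (rule cs_vec)
      also have "norm (matrix_inv (charF m A \<tau> z) *v x) \<le> \<phi> z * norm x"
        unfolding \<phi>_def sigma_max_def by (rule onorm) simp
      finally show ?thesis using x(1) nv pz2 by (simp add: mult_left_mono less_imp_le)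
    qed
    have gz2: "g z2 = complex_of_real ((\<phi> z2)^2)"
      unfolding g_def using self_vec[of v] nv by (simp add: v_def)
    show False
    proof (rule KL[OF hol s01])
      fix e :: real assume e: "e > 0"
      obtain R where R: "\<And>z. Re z \<ge> \<sigma>1 \<Longrightarrow> cmod z \<ge> R \<Longrightarrow> \<phi> z < e / \<phi> z2"
        using decay_smax[OF tau divide_pos_pos[OF e pz2], of \<sigma>1 A] unfolding \<phi>_def by blast
      show "\<exists>R. \<forall>z. Re z \<ge> \<sigma>1 \<longrightarrow> cmod z \<ge> R \<longrightarrow> cmod (g z) < e"
      proof (intro exI allI impI)
        fix z assume "Re z \<ge> \<sigma>1" "cmod z \<ge> R"
        then have "\<phi> z < e / \<phi> z2" by (rule R)
        then have "\<phi> z2 * \<phi> z < \<phi> z2 * (e / \<phi> z2)" using pz2 by (rule mult_strict_left_mono)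
        then show "cmod (g z) < e" using gb[of z] pz2 by simp
      qed
    next
      show "Re z2 > \<sigma>1" using h2 by (simp add: z2_def)
      show "g z2 \<noteq> 0" using gz2 pz2 by simp
    next
      fix z assume rz: "Re z = \<sigma>1"
      have "z = Complex \<sigma>1 (Im z)" using rz by (simp add: complex_eq_iff)
      then have "\<phi> z \<le> \<phi> z2" using line0[of "Im z"] by simp
      then have "\<phi> z2 * \<phi> z \<le> \<phi> z2 * \<phi> z2" using pz2 by (simp add: mult_left_mono)
      moreover have "cmod (g z2) = \<phi> z2 * \<phi> z2" using gz2 pz2 by (simp add: power2_eq_square norm_mult)
      ultimately show "cmod (g z) \<le> cmod (g z2)" using gb[of z] by linarith
    qed
  qed
  then obtain \<omega>1 where \<omega>1: "\<phi> (Complex \<sigma>1 \<omega>1) > \<phi> z2" by blast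
  have "alpha_f m A \<tau> wt \<sigma>2 = W \<sigma>2 * \<phi> z2" using a2 by (simp add: z2_def)
  also have "\<dots> \<le> W \<sigma>1 * \<phi> z2" using Wmono pz2 by (simp add: mult_right_mono)
  also have "\<dots> < W \<sigma>1 * \<phi> (Complex \<sigma>1 \<omega>1)" using \<omega>1 Wpos[of \<sigma>1] by simp
  also have "\<dots> \<le> W \<sigma>1 * \<phi> (Complex \<sigma>1 w1)" using max1[of \<omega>1] Wpos[of \<sigma>1] by simp
  also have "\<dots> = alpha_f m A \<tau> wt \<sigma>1" using a1 by simp
  finally show "alpha_f m A \<tau> wt \<sigma>2 < alpha_f m A \<tau> wt \<sigma>1" .
qed

end
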